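(* Let $(x_n,y_n)_{n\in\mathbb Z}$ and $(x'_n,y'_n)_{n\in\mathbb Z}$ be two elliptic sequences in general position on the same biquadratic polynomial $F$. For integers $m\ge1$, $r,s$, let $Q_{m,r,s}(y)=\dfrac{(y-y_r)\cdots(y-y_{r+m-1})}{(y-y'_s)\cdots(y-y'_{s+m-1})}$. Then there exist a constant $C^\dagger_{m,r,s}$ and a polynomial $D^\dagger_{m,r,s}$ of degree at most $2$ such that, as rational functions of $x$, $$\mathcal D^\dagger Q_{m,r,s}(x)=C^\dagger_{m,r,s}X_2(x)\frac{(x-x_{r+1})\cdots(x-x_{r+m-1})}{(x-x'_s)(x-x'_{s+1})\cdots(x-x'_{s+m})},\qquad \mathcal M^\dagger Q_{m,r,s}(x)=D^\dagger_{m,r,s}(x)\frac{(x-x_{r+1})\cdots(x-x_{r+m-1})}{(x-x'_s)\cdots(x-x'_{s+m})}.$$ Moreover $C^\dagger_{1,r,s}=\dfrac{y'_s-y_r}{Y_2(y'_s)}$ and $D^\dagger_{1,r,s}(x)=\dfrac{X_0(x)+(y_r+y'_s)X_1(x)/2+y_ry'_sX_2(x)}{Y_2(y'_s)}$.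
   Context: $F(x,y)=\sum_{i,j=0}^2c_{i,j}x^iy^j=Y_0(y)+xY_1(y)+x^2Y_2(y)=X_0(x)+yX_1(x)+y^2X_2(x)$. An elliptic sequence on $F$ is $(x_n,y_n)_{n\in\mathbb Z}$ such that for every $n$, $x_n,x_{n+1}$ are the two roots of $F(\cdot,y_n)$ and $y_{n-1},y_n$ the two roots of $F(x_n,\cdot)$; general position: all $x_n,x'_n$ distinct, all $y_n,y'_n$ distinct, $X_2,Y_2$ nonvanishing there. For a rational function $g$ of $y$ and a value $x$ with $y^\pm$ the two roots of $F(x,y)=0$: $(\mathcal D^\dagger g)(x)=-\frac{g(y^+)-g(y^-)}{y^+-y^-}$, $(\mathcal M^\dagger g)(x)=\frac{g(y^+)+g(y^-)}2$; on the lattice $(\mathcal D^\dagger g)(x_n)=-\frac{g(y_n)-g(y_{n-1})}{y_n-y_{n-1}}$, $(\mathcal M^\dagger g)(x_n)=\frac{g(y_n)+g(y_{n-1})}2$. Empty products equal $1$. *)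

theory Defs
  imports Complex_Main "HOL-Computational_Algebra.Polynomial"
begin

definition bqF :: "(nat \<Rightarrow> nat \<Rightarrow> complex) \<Rightarrow> complex \<Rightarrow> complex \<Rightarrow> complex" where
  "bqF c x y = (\<Sum>i\<le>2. \<Sum>j\<le>2. c i j * x ^ i * y ^ j)"

definition bqX :: "(nat \<Rightarrow> nat \<Rightarrow> complex) \<Rightarrow> nat \<Rightarrow> complex \<Rightarrow> complex" where
  "bqX c j x = (\<Sum>i\<le>2. c i j * x ^ i)"

definition bqY :: "(nat \<Rightarrow> nat \<Rightarrow> complex) \<Rightarrow> nat \<Rightarrow> complex \<Rightarrow> complex" where
  "bqY c i y = (\<Sum>j\<le>2. c i j * y ^ j)"

text \<open>Elliptic sequence: x_n, x_{n+1} are the two roots (with multiplicity) of F(.,y_n),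
  and y_{n-1}, y_n are the two roots of F(x_n,.).\<close>
definition elliptic_seq ::
  "(nat \<Rightarrow> nat \<Rightarrow> complex) \<Rightarrow> (int \<Rightarrow> complex) \<Rightarrow> (int \<Rightarrow> complex) \<Rightarrow> bool" where
  "elliptic_seq c xs ys \<longleftrightarrow>
     (\<forall>n. \<forall>t. bqF c t (ys n) = bqY c 2 (ys n) * (t - xs n) * (t - xs (n + 1))) \<and>
     (\<forall>n. \<forall>t. bqF c (xs n) t = bqX c 2 (xs n) * (t - ys (n - 1)) * (t - ys n))"

definition general_position ::
  "(nat \<Rightarrow> nat \<Rightarrow> complex) \<Rightarrow> (int \<Rightarrow> complex) \<Rightarrow> (int \<Rightarrow> complex)
     \<Rightarrow> (int \<Rightarrow> complex) \<Rightarrow> (int \<Rightarrow> complex) \<Rightarrow> bool" where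
  "general_position c xs ys xs' ys' \<longleftrightarrow>
     inj xs \<and> inj xs' \<and> (\<forall>n m. xs n \<noteq> xs' m) \<and>
     inj ys \<and> inj ys' \<and> (\<forall>n m. ys n \<noteq> ys' m) \<and>
     (\<forall>n. bqX c 2 (xs n) \<noteq> 0 \<and> bqX c 2 (xs' n) \<noteq> 0) \<and>
     (\<forall>n. bqY c 2 (ys n) \<noteq> 0 \<and> bqY c 2 (ys' n) \<noteq> 0)"

text \<open>The operators D-dagger and M-dagger applied to g at a point x whose two roots
  F(x,.) are yp, ym.\<close>
definition Ddag :: "(complex \<Rightarrow> complex) \<Rightarrow> complex \<Rightarrow> complex \<Rightarrow> complex" where
  "Ddag g yp ym = - (g yp - g ym) / (yp - ym)"

definition Mdag :: "(complex \<Rightarrow> complex) \<Rightarrow> complex \<Rightarrow> complex \<Rightarrow> complex" where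
  "Mdag g yp ym = (g yp + g ym) / 2"

definition Qfun :: "(int \<Rightarrow> complex) \<Rightarrow> (int \<Rightarrow> complex) \<Rightarrow> nat \<Rightarrow> int \<Rightarrow> int \<Rightarrow> complex \<Rightarrow> complex" where
  "Qfun ys ys' m r s y = (\<Prod>k<m. (y - ys (r + int k))) / (\<Prod>k<m. (y - ys' (s + int k)))"

end

theory Submission
  imports Defs
begin

lemma lin_prod_degree:
  fixes z :: "nat \<Rightarrow> complex"
  shows "degree (\<Prod>k\<in>K. [:-z k, 1:]) = card K"
proof (cases "finite K")
  case True
  have "degree (\<Prod>k\<in>K. [:-z k, 1:]) = (\<Sum>k\<in>K. degree [:-z k, 1:])"
    by (rule degree_prod_eq_sum_degree) auto
  then show ?thesis by simp
qed simp

lemma lin_prod_dvd: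
  fixes z :: "nat \<Rightarrow> complex"
  assumes K: "finite K" "inj_on z K" and V: "\<And>k. k \<in> K \<Longrightarrow> poly V (z k) = 0"
  shows "V = (\<Prod>k\<in>K. [:-z k, 1:]) * (V div (\<Prod>k\<in>K. [:-z k, 1:]))"
proof -
  define N where "N = (\<Prod>k\<in>K. [:-z k, 1:])"
  have N0: "N \<noteq> 0" unfolding N_def using K by (auto simp: prod_zero_iff)
  have dN: "degree N = card K" unfolding N_def by (rule lin_prod_degree)
  have rN: "poly N (z k) = 0" if "k \<in> K" for k
    unfolding N_def poly_prod using K that by (auto simp: prod_zero_iff)
  have "V mod N = 0"
  proof (rule ccontr)
    assume ne: "V mod N \<noteq> 0"
    then have dl: "degree (V mod N) < card K" using degree_mod_less[OF N0, of V] dN by auto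
    have "V mod N = 0"
    proof (rule poly_eqI_degree[where A = "z ` K"])
      fix x assume "x \<in> z ` K"
      then obtain k where k: "k \<in> K" "x = z k" by auto
      have "V = N * (V div N) + V mod N" by simp
      then have "poly V x = poly N x * poly (V div N) x + poly (V mod N) x"
        by (metis poly_add poly_mult)
      then show "poly (V mod N) x = poly 0 x" using k V rN by simp
    next
      show "degree (V mod N) < card (z ` K)" using dl K card_image by metis
      then show "degree 0 < card (z ` K)" by simp
    qed
    with ne show False by simp
  qed
  then show ?thesis unfolding N_def[symmetric] by (metis add_0_right div_mult_mod_eq mult.commute)
qed

lemma pf:
  fixes u w :: "nat \<Rightarrow> complex"
  assumes m: "m \<ge> 1" and inj: "inj_on w {..<m}" and y: "\<forall>k<m. y \<noteq> w k"
  shows "(\<Prod>k<m. (y - u k)) / (\<Prod>k<m. (y - w k))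
     = 1 + (\<Sum>k<m. ((\<Prod>j<m. (w k - u j)) / (\<Prod>j\<in>{..<m}-{k}. (w k - w j))) / (y - w k))"
proof -
  define P where "P = (\<Prod>k<m. [:-u k,1:])"
  define W where "W = (\<Prod>k<m. [:-w k,1:])"
  define L where "L k = (\<Prod>j\<in>{..<m}-{k}. [:-w j,1:])" for k
  define A where "A k = (\<Prod>j<m. (w k - u j)) / (\<Prod>j\<in>{..<m}-{k}. (w k - w j))" for k
  have dP: "degree P = m" unfolding P_def by (simp add: lin_prod_degree)
  have dW: "degree W = m" unfolding W_def by (simp add: lin_prod_degree)
  have lP: "coeff P m = 1" using dP lead_coeff_prod[of "\<lambda>k. [:-u k,1:]" "{..<m}"] unfolding P_def by simp
  have lW: "coeff W m = 1" using dW lead_coeff_prod[of "\<lambda>k. [:-w k,1:]" "{..<m}"] unfolding W_def by simp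
  have dPW: "degree (P - W) < m"
  proof -
    have le: "degree (P - W) \<le> m" using degree_diff_le[of P m W] dP dW by simp
    have c0: "coeff (P - W) m = 0" using lP lW by simp
    show ?thesis
    proof (cases "P - W = 0")
      case True then show ?thesis using m by simp
    next
      case False
      then have "coeff (P - W) (degree (P - W)) \<noteq> 0" by (metis leading_coeff_0_iff)
      then show ?thesis using le c0 by (metis le_neq_implies_less)
    qed
  qed
  have dL: "degree (L k) = m - 1" if "k < m" for k
    unfolding L_def lin_prod_degree using that by simp
  have R: "P - W = (\<Sum>k<m. smult (A k) (L k))"
  proof (rule poly_eqI_degree[where A = "w ` {..<m}"])
    fix x assume "x \<in> w ` {..<m}"
    then obtain i where i: "i < m" "x = w i" by auto
    have W0: "poly W x = 0" unfolding W_def poly_prod using i by (auto simp: prod_zero_iff)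
    have Lz: "poly (L k) x = 0" if "k < m" "k \<noteq> i" for k
      unfolding L_def poly_prod using i that by (auto simp: prod_zero_iff)
    have Li: "poly (L i) x = (\<Prod>j\<in>{..<m}-{i}. (w i - w j))"
      unfolding L_def poly_prod using i by simp
    have nz: "(\<Prod>j\<in>{..<m}-{i}. (w i - w j)) \<noteq> 0"
      using inj i by (auto simp: prod_zero_iff inj_on_def)
    have "poly (\<Sum>k<m. smult (A k) (L k)) x = (\<Sum>k<m. A k * poly (L k) x)"
      by (simp add: poly_sum)
    also have "\<dots> = A i * poly (L i) x + (\<Sum>k\<in>{..<m}-{i}. A k * poly (L k) x)"
      using i by (simp add: sum.remove)
    also have "(\<Sum>k\<in>{..<m}-{i}. A k * poly (L k) x) = 0"
      by (rule sum.neutral) (auto simp: Lz)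
    also have "A i * poly (L i) x = (\<Prod>j<m. (w i - u j))"
      using Li nz unfolding A_def by simp
    also have "\<dots> = poly P x" unfolding P_def poly_prod using i by simp
    finally show "poly (P - W) x = poly (\<Sum>k<m. smult (A k) (L k)) x" using W0 by simp
  next
    have c: "card (w ` {..<m}) = m" using inj by (simp add: card_image)
    then show "degree (P - W) < card (w ` {..<m})" using dPW by simp
    have "degree (\<Sum>k<m. smult (A k) (L k)) \<le> m - 1"
      by (rule degree_sum_le) (auto intro: order.trans[OF degree_smult_le] simp: dL)
    then show "degree (\<Sum>k<m. smult (A k) (L k)) < card (w ` {..<m})" using c m by linarith
  qed
  have Wy: "poly W y \<noteq> 0" unfolding W_def poly_prod using y by (auto simp: prod_zero_iff)
  have WL: "poly W y = (y - w k) * poly (L k) y" if "k < m" for k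
    unfolding W_def L_def poly_prod using that by (simp add: prod.remove)
  have "poly P y = poly W y + (\<Sum>k<m. A k * poly (L k) y)"
    using arg_cong[OF R, of "\<lambda>p. poly p y"] by (simp add: poly_sum algebra_simps)
  then have "poly P y / poly W y = 1 + (\<Sum>k<m. A k * poly (L k) y / poly W y)"
    using Wy by (simp add: add_divide_distrib sum_divide_distrib)
  also have "(\<Sum>k<m. A k * poly (L k) y / poly W y) = (\<Sum>k<m. A k / (y - w k))"
  proof (rule sum.cong)
    fix k assume k: "k \<in> {..<m}"
    then have "y - w k \<noteq> 0" using y by auto
    then show "A k * poly (L k) y / poly W y = A k / (y - w k)"
    proof -
      have e: "poly W y = (y - w k) * poly (L k) y" using WL[of k] k by simp
      have "poly (L k) y \<noteq> 0" using e Wy by auto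
      then show ?thesis unfolding e using \<open>y - w k \<noteq> 0\<close> by (simp add: field_simps)
    qed
  qed simp
  finally show ?thesis unfolding P_def W_def A_def poly_prod by simp
qed


lemma bqF_X: "bqF c x t = bqX c 0 x + t * bqX c 1 x + t^2 * bqX c 2 x"
  unfolding bqF_def bqX_def by (simp add: eval_nat_numeral atMost_Suc algebra_simps)

definition Xp :: "(nat \<Rightarrow> nat \<Rightarrow> complex) \<Rightarrow> nat \<Rightarrow> complex poly" where
  "Xp c j = [:c 0 j, c 1 j, c 2 j:]"

lemma poly_Xp: "poly (Xp c j) x = bqX c j x"
  unfolding Xp_def bqX_def by (simp add: eval_nat_numeral atMost_Suc algebra_simps)

lemma degree_Xp: "degree (Xp c j) \<le> 2"
  unfolding Xp_def by (simp add: degree_pCons_le)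

definition wA :: "(int \<Rightarrow> complex) \<Rightarrow> (int \<Rightarrow> complex) \<Rightarrow> nat \<Rightarrow> int \<Rightarrow> int \<Rightarrow> nat \<Rightarrow> complex" where
  "wA ys ys' m r s k = (\<Prod>j<m. (ys' (s + int k) - ys (r + int j))) /
      (\<Prod>j\<in>{..<m}-{k}. (ys' (s + int k) - ys' (s + int j)))"

definition Dnp :: "(int \<Rightarrow> complex) \<Rightarrow> int \<Rightarrow> nat \<Rightarrow> complex poly" where
  "Dnp xs' s m = (\<Prod>k\<le>m. [:- xs' (s + int k), 1:])"

definition Ep :: "(int \<Rightarrow> complex) \<Rightarrow> int \<Rightarrow> nat \<Rightarrow> nat \<Rightarrow> complex poly" where
  "Ep xs' s m k = (\<Prod>j\<in>{..m}-{k, Suc k}. [:- xs' (s + int j), 1:])"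

definition Up where
  "Up c ys ys' xs' m r s = (\<Sum>k<m. smult (wA ys ys' m r s k / bqY c 2 (ys' (s + int k))) (Ep xs' s m k))"

definition Vp where
  "Vp c ys ys' xs' m r s = Dnp xs' s m + (\<Sum>k<m. smult (wA ys ys' m r s k / (2 * bqY c 2 (ys' (s + int k))))
      ((- Xp c 1 - smult (2 * ys' (s + int k)) (Xp c 2)) * Ep xs' s m k))"

lemma Dnp_split:
  assumes "k < m"
  shows "poly (Dnp xs' s m) x = (x - xs' (s + int k)) * (x - xs' (s + int k + 1)) * poly (Ep xs' s m k) x"
proof -
  have e: "{..m} = insert k (insert (Suc k) ({..m}-{k, Suc k}))" using assms by auto
  show ?thesis unfolding Dnp_def Ep_def poly_prod
    by (subst e) (simp add: algebra_simps)
qed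

lemma frac1: "(E::complex) \<noteq> 0 \<Longrightarrow> X * (A / Y) * E / (P * E) = X * A / (Y * P)"
  by (cases "Y = 0"; cases "P = 0") (simp_all add: field_simps)

lemma frac2: "(E::complex) \<noteq> 0 \<Longrightarrow> A / (2 * Y) * Z * E / (P * E) = A * Z / (2 * (Y * P))"
  by (cases "Y = 0"; cases "P = 0") (simp_all add: field_simps)

lemma frac3:
  fixes a b w X A :: complex
  assumes "a \<noteq> w" "b \<noteq> w" "a \<noteq> b" "X \<noteq> 0"
  shows "X*A/(X*((a-w)*(b-w))) = A*(-(1/(a-w) - 1/(b-w))/(a-b))"
proof -
  have p: "a - w \<noteq> 0" "b - w \<noteq> 0" "a - b \<noteq> 0" using assms by auto
  have "1/(a-w) - 1/(b-w) = (b - a)/((a-w)*(b-w))" using p by (simp add: divide_simps)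
  then have "-(1/(a-w) - 1/(b-w))/(a-b) = 1/((a-w)*(b-w))" using p by (simp add: divide_simps)
  then show ?thesis using assms by simp
qed
lemma frac4:
  fixes a b w X A :: complex
  assumes "a \<noteq> w" "b \<noteq> w" "X \<noteq> 0"
  shows "A*(X*(a+b-2*w))/(2*(X*((a-w)*(b-w)))) = A*(1/(a-w)+1/(b-w))/2"
proof -
  have p: "a - w \<noteq> 0" "b - w \<noteq> 0" using assms by auto
  have "1/(a-w) + 1/(b-w) = (a+b-2*w)/((a-w)*(b-w))" using p by (simp add: divide_simps)
  then show ?thesis using assms by simp
qed

lemma formula:
  assumes ell: "elliptic_seq c xs' ys'" and injy: "inj ys'" and Y2: "\<forall>n. bqY c 2 (ys' n) \<noteq> 0"
    and m: "m \<ge> 1"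
    and x: "\<forall>k\<le>m. x \<noteq> xs' (s + int k)" and ab: "a \<noteq> b"
    and F: "\<forall>t. bqF c x t = bqX c 2 x * (t - a) * (t - b)"
  shows "Ddag (Qfun ys ys' m r s) a b = bqX c 2 x * poly (Up c ys ys' xs' m r s) x / poly (Dnp xs' s m) x"
    and "Mdag (Qfun ys ys' m r s) a b = poly (Vp c ys ys' xs' m r s) x / poly (Dnp xs' s m) x"
proof -
  define w where "w k = ys' (s + int k)" for k
  define A where "A k = wA ys ys' m r s k" for k
  define X0 where "X0 = bqX c 0 x"
  define X1 where "X1 = bqX c 1 x"
  define X2 where "X2 = bqX c 2 x"
  define Dn where "Dn = poly (Dnp xs' s m) x"
  define E where "E k = poly (Ep xs' s m k) x" for k
  have Fw: "bqF c x (w k) = bqY c 2 (w k) * (x - xs' (s + int k)) * (x - xs' (s + int k + 1))" for k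
    using ell unfolding elliptic_seq_def w_def by blast
  have Fnz: "bqF c x (w k) \<noteq> 0" if "k < m" for k
  proof -
    have "x \<noteq> xs' (s + int k)" using x that by simp
    moreover have "x \<noteq> xs' (s + int k + 1)" using x[rule_format, of "Suc k"] that by (simp add: algebra_simps)
    ultimately show ?thesis using Fw Y2 unfolding w_def by simp
  qed
  have X2nz: "X2 \<noteq> 0" using Fnz[of 0] m F unfolding X2_def by auto
  have aw: "a \<noteq> w k" "b \<noteq> w k" if "k < m" for k using Fnz[OF that] F by auto
  have abw: "X2 * ((a - w k) * (b - w k)) = bqY c 2 (w k) * (x - xs' (s + int k)) * (x - xs' (s + int k + 1))" for k
  proof -
    have "bqF c x (w k) = X2 * (w k - a) * (w k - b)" using F unfolding X2_def by simp
    then show ?thesis using Fw[of k] by (simp add: algebra_simps)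
  qed
  have X1ab: "X1 = - X2 * (a + b)"
  proof -
    have "bqF c x 0 = X2 * a * b" using F unfolding X2_def by simp
    moreover have "bqF c x 1 = X2 * (1 - a) * (1 - b)" using F unfolding X2_def by simp
    ultimately have h: "X1 + X2 * (a + b) = 0" unfolding X1_def X2_def by (simp add: bqF_X algebra_simps)
    have "X1 = - (X2 * (a + b))" using h by (simp add: eq_neg_iff_add_eq_0)
    then show ?thesis by simp
  qed
  have injw: "inj_on w {..<m}" using injy unfolding w_def inj_on_def inj_def by fastforce
  have Q: "Qfun ys ys' m r s y = 1 + (\<Sum>k<m. A k / (y - w k))" if "\<forall>k<m. y \<noteq> w k" for y
    unfolding Qfun_def A_def wA_def w_def using pf[OF m, of "\<lambda>k. ys' (s + int k)" y "\<lambda>k. ys (r + int k)"]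
      injw that unfolding w_def by simp
  have Qa: "Qfun ys ys' m r s a = 1 + (\<Sum>k<m. A k / (a - w k))" using Q aw by auto
  have Qb: "Qfun ys ys' m r s b = 1 + (\<Sum>k<m. A k / (b - w k))" using Q aw by auto
  have DnE: "Dn = (x - xs' (s + int k)) * (x - xs' (s + int k + 1)) * E k" if "k < m" for k
    unfolding Dn_def E_def using Dnp_split[OF that] by simp
  have Dnz: "Dn \<noteq> 0" unfolding Dn_def Dnp_def poly_prod using x by (auto simp: prod_zero_iff)
  show "Ddag (Qfun ys ys' m r s) a b = bqX c 2 x * poly (Up c ys ys' xs' m r s) x / poly (Dnp xs' s m) x"
  proof -
    have "Ddag (Qfun ys ys' m r s) a b = (\<Sum>k<m. A k * (- (1 / (a - w k) - 1 / (b - w k)) / (a - b)))"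
    proof -
      have "(\<Sum>k<m. A k * (- (1 / (a - w k) - 1 / (b - w k)) / (a - b)))
          = (\<Sum>k<m. (- (A k / (a - w k) - A k / (b - w k))) / (a - b))"
        by (rule sum.cong) (simp_all add: right_diff_distrib)
      also have "\<dots> = (- ((\<Sum>k<m. A k / (a - w k)) - (\<Sum>k<m. A k / (b - w k)))) / (a - b)"
        by (simp only: sum_divide_distrib[symmetric] sum_negf sum_subtractf)
      finally show ?thesis unfolding Ddag_def Qa Qb by simp
    qed
    also have "\<dots> = (\<Sum>k<m. X2 * (A k / bqY c 2 (w k)) * E k / Dn)"
    proof (rule sum.cong)
      fix k assume "k \<in> {..<m}"
      then have k: "k < m" by simp
      have 1: "a - w k \<noteq> 0" "b - w k \<noteq> 0" using aw[OF k] by auto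
      have 2: "a - b \<noteq> 0" using ab by simp
      have Y: "bqY c 2 (w k) \<noteq> 0" using Y2 unfolding w_def by simp
      have Ek: "E k \<noteq> 0" using DnE[OF k] Dnz by auto
      have 3: "(x - xs' (s + int k)) * (x - xs' (s + int k + 1)) \<noteq> 0" using DnE[OF k] Dnz by auto
      have "X2 * (A k / bqY c 2 (w k)) * E k / Dn
          = X2 * A k / (bqY c 2 (w k) * ((x - xs' (s + int k)) * (x - xs' (s + int k + 1))))"
        unfolding DnE[OF k] using Ek by (rule frac1)
      also have "\<dots> = X2 * A k / (X2 * ((a - w k) * (b - w k)))"
        using abw[of k] by (simp add: algebra_simps)
      also have "\<dots> = A k * (- (1 / (a - w k) - 1 / (b - w k)) / (a - b))"
        using aw[OF k] ab X2nz by (rule frac3)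
      finally show "A k * (- (1 / (a - w k) - 1 / (b - w k)) / (a - b)) = X2 * (A k / bqY c 2 (w k)) * E k / Dn"
        by simp
    qed simp
    also have "\<dots> = bqX c 2 x * poly (Up c ys ys' xs' m r s) x / poly (Dnp xs' s m) x"
      unfolding Up_def poly_sum X2_def Dn_def E_def A_def w_def
      by (simp add: sum_distrib_left sum_divide_distrib algebra_simps)
    finally show ?thesis .
  qed
  show "Mdag (Qfun ys ys' m r s) a b = poly (Vp c ys ys' xs' m r s) x / poly (Dnp xs' s m) x"
  proof -
    have "Mdag (Qfun ys ys' m r s) a b = 1 + (\<Sum>k<m. A k * (1 / (a - w k) + 1 / (b - w k)) / 2)"
    proof -
      have "(\<Sum>k<m. A k * (1 / (a - w k) + 1 / (b - w k)) / 2)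
          = (\<Sum>k<m. (A k / (a - w k) + A k / (b - w k)) / 2)"
        by (rule sum.cong) (simp_all add: distrib_left)
      also have "\<dots> = ((\<Sum>k<m. A k / (a - w k)) + (\<Sum>k<m. A k / (b - w k))) / 2"
        by (simp only: sum_divide_distrib[symmetric] sum.distrib)
      finally show ?thesis unfolding Mdag_def Qa Qb by (simp add: add_divide_distrib)
    qed
    also have "(\<Sum>k<m. A k * (1 / (a - w k) + 1 / (b - w k)) / 2)
        = (\<Sum>k<m. A k / (2 * bqY c 2 (w k)) * (- X1 - 2 * w k * X2) * E k / Dn)"
    proof (rule sum.cong)
      fix k assume "k \<in> {..<m}"
      then have k: "k < m" by simp
      have 1: "a - w k \<noteq> 0" "b - w k \<noteq> 0" using aw[OF k] by auto
      have Y: "bqY c 2 (w k) \<noteq> 0" using Y2 unfolding w_def by simp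
      have Ek: "E k \<noteq> 0" using DnE[OF k] Dnz by auto
      have "A k / (2 * bqY c 2 (w k)) * (- X1 - 2 * w k * X2) * E k / Dn
          = A k * (- X1 - 2 * w k * X2) / (2 * (bqY c 2 (w k) * ((x - xs' (s + int k)) * (x - xs' (s + int k + 1)))))"
        unfolding DnE[OF k] using Ek by (rule frac2)
      also have "\<dots> = A k * (- X1 - 2 * w k * X2) / (2 * (X2 * ((a - w k) * (b - w k))))"
      proof -
        have e: "bqY c 2 (w k) * ((x - xs' (s + int k)) * (x - xs' (s + int k + 1))) = X2 * ((a - w k) * (b - w k))"
          using abw[of k] by (simp add: mult.assoc)
        show ?thesis by (simp only: e)
      qed
      also have "\<dots> = A k * (X2 * (a + b - 2 * w k)) / (2 * (X2 * ((a - w k) * (b - w k))))"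
        unfolding X1ab by (simp add: algebra_simps)
      also have "\<dots> = A k * (1 / (a - w k) + 1 / (b - w k)) / 2"
        using aw[OF k] X2nz by (rule frac4)
      finally show "A k * (1 / (a - w k) + 1 / (b - w k)) / 2 = A k / (2 * bqY c 2 (w k)) * (- X1 - 2 * w k * X2) * E k / Dn"
        by simp
    qed simp
    also have "1 + (\<Sum>k<m. A k / (2 * bqY c 2 (w k)) * (- X1 - 2 * w k * X2) * E k / Dn)
        = poly (Vp c ys ys' xs' m r s) x / poly (Dnp xs' s m) x"
      unfolding Vp_def poly_add poly_sum Dn_def[symmetric] using Dnz
      by (simp add: add_divide_distrib sum_divide_distrib poly_Xp X1_def X2_def E_def A_def w_def algebra_simps)
    finally show ?thesis .
  qed
qed


lemma degree_Ep: "k < m \<Longrightarrow> degree (Ep xs' s m k) = m - 1"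
proof -
  assume k: "k < m"
  have "card ({..m} - {k, Suc k}) = card {..m} - card {k, Suc k}"
    by (rule card_Diff_subset) (use k in auto)
  then have "card ({..m} - {k, Suc k}) = m - 1" by simp
  then show ?thesis unfolding Ep_def by (simp add: lin_prod_degree)
qed

lemma degree_Up: "degree (Up c ys ys' xs' m r s) \<le> m - 1"
  unfolding Up_def
  by (rule degree_sum_le) (auto intro: order.trans[OF degree_smult_le] simp: degree_Ep)

lemma degree_Vp: "degree (Vp c ys ys' xs' m r s) \<le> m + 1"
proof -
  have d1: "degree (Dnp xs' s m) \<le> m + 1" unfolding Dnp_def by (simp add: lin_prod_degree)
  have dX: "degree (- Xp c 1 - smult a (Xp c 2)) \<le> 2" for a
    by (rule order.trans[OF degree_diff_le_max]) (simp add: degree_Xp order.trans[OF degree_smult_le degree_Xp])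
  have "degree ((- Xp c 1 - smult a (Xp c 2)) * Ep xs' s m k) \<le> m + 1" if "k < m" for a k
    by (rule order.trans[OF degree_mult_le]) (use dX[of a] degree_Ep[OF that, of xs' s] that in simp)
  then have d2: "degree (\<Sum>k<m. smult (wA ys ys' m r s k / (2 * bqY c 2 (ys' (s + int k))))
      ((- Xp c 1 - smult (2 * ys' (s + int k)) (Xp c 2)) * Ep xs' s m k)) \<le> m + 1"
    by (intro degree_sum_le) (auto intro: order.trans[OF degree_smult_le])
  show ?thesis unfolding Vp_def
    by (rule order.trans[OF degree_add_le_max]) (use d1 d2 in simp)
qed

theorem mainTheorem15:
  fixes c :: "nat \<Rightarrow> nat \<Rightarrow> complex"
    and xs ys xs' ys' :: "int \<Rightarrow> complex"
  assumes "elliptic_seq c xs ys"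
    and "elliptic_seq c xs' ys'"
    and "general_position c xs ys xs' ys'"
    and "m \<ge> 1"
  shows "\<exists>(C::complex) (D::complex poly).
     degree D \<le> 2 \<and>
     (m = 1 \<longrightarrow>
        C = (ys' s - ys r) / bqY c 2 (ys' s) \<and>
        (\<forall>x. poly D x = (bqX c 0 x + (ys r + ys' s) * bqX c 1 x / 2 + ys r * ys' s * bqX c 2 x)
                         / bqY c 2 (ys' s))) \<and>
     (\<exists>S. finite S \<and>
        (\<forall>x. x \<notin> S \<longrightarrow> (\<forall>yp ym. yp \<noteq> ym \<longrightarrow>
            (\<forall>t. bqF c x t = bqX c 2 x * (t - yp) * (t - ym)) \<longrightarrow>
            Ddag (Qfun ys ys' m r s) yp ym
              = C * bqX c 2 x * (\<Prod>k\<in>{1..<m}. (x - xs (r + int k)))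
                  / (\<Prod>k\<le>m. (x - xs' (s + int k))) \<and>
            Mdag (Qfun ys ys' m r s) yp ym
              = poly D x * (\<Prod>k\<in>{1..<m}. (x - xs (r + int k)))
                  / (\<Prod>k\<le>m. (x - xs' (s + int k))))))"
proof -
  note ell = assms(1) and ell' = assms(2) and m = assms(4)
  have injx: "inj xs" and injy: "inj ys" and injy': "inj ys'" and dx: "\<And>n k. xs n \<noteq> xs' k"
    and dy: "\<And>n k. ys n \<noteq> ys' k"
    and X2x: "\<And>n. bqX c 2 (xs n) \<noteq> 0" and Y2: "\<forall>n. bqY c 2 (ys' n) \<noteq> 0"
    using assms(3) unfolding general_position_def by auto
  define U where "U = Up c ys ys' xs' m r s"
  define V where "V = Vp c ys ys' xs' m r s"
  define z where "z k = xs (r + int k)" for k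
  define Np where "Np = (\<Prod>k\<in>{1..<m}. [:- z k, 1:])"
  define Dn where "Dn = Dnp xs' s m"
  have Dn_eval: "poly Dn x = (\<Prod>k\<le>m. (x - xs' (s + int k)))" for x
    unfolding Dn_def Dnp_def poly_prod by simp
  have Np_eval: "poly Np x = (\<Prod>k\<in>{1..<m}. (x - xs (r + int k)))" for x
    unfolding Np_def z_def poly_prod by simp
  have van: "poly U (z j) = 0 \<and> poly V (z j) = 0" if j: "j \<in> {1..<m}" for j
  proof -
    define n where "n = r + int j"
    define x where "x = xs n"
    have F: "\<forall>t. bqF c x t = bqX c 2 x * (t - ys (n - 1)) * (t - ys n)"
      using ell unfolding elliptic_seq_def x_def by blast
    have ab: "ys (n - 1) \<noteq> ys n" using injy unfolding inj_def by force
    have xn: "\<forall>k\<le>m. x \<noteq> xs' (s + int k)" using dx unfolding x_def by auto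
    have Qa: "Qfun ys ys' m r s (ys (n - 1)) = 0"
    proof -
      have "n - 1 = r + int (j - 1)" using j unfolding n_def by auto
      moreover have "j - 1 < m" using j by auto
      ultimately have "(\<Prod>k<m. (ys (n - 1) - ys (r + int k))) = 0"
        by (auto simp: prod_zero_iff intro!: bexI[of _ "j - 1"])
      then show ?thesis unfolding Qfun_def by simp
    qed
    have Qb: "Qfun ys ys' m r s (ys n) = 0"
    proof -
      have "(\<Prod>k<m. (ys n - ys (r + int k))) = 0"
        using j unfolding n_def by (auto simp: prod_zero_iff intro!: bexI[of _ j])
      then show ?thesis unfolding Qfun_def by simp
    qed
    note f = formula[OF ell' injy' Y2 m xn ab F, of ys r]
    have X2: "bqX c 2 x \<noteq> 0" unfolding x_def by (rule X2x)
    have Dnz: "poly Dn x \<noteq> 0" unfolding Dn_eval using xn by (auto simp: prod_zero_iff)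
    have "bqX c 2 x * poly U x / poly Dn x = 0"
      using f(1) Qa Qb unfolding U_def Dn_def Ddag_def by simp
    then have "poly U x = 0" using X2 Dnz by simp
    moreover have "poly V x / poly Dn x = 0"
      using f(2) Qa Qb unfolding V_def Dn_def Mdag_def by simp
    then have "poly V x = 0" using Dnz by simp
    ultimately show ?thesis unfolding x_def n_def z_def by simp
  qed
  have injz: "inj_on z {1..<m}" using injx unfolding z_def inj_def inj_on_def by fastforce
  have Uf: "U = Np * (U div Np)" unfolding Np_def
    by (rule lin_prod_dvd) (use injz van in auto)
  have Vf: "V = Np * (V div Np)" unfolding Np_def
    by (rule lin_prod_dvd) (use injz van in auto)
  have dNp: "degree Np = m - 1" unfolding Np_def lin_prod_degree by simp
  have Np0: "Np \<noteq> 0" unfolding Np_def by (auto simp: prod_zero_iff)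
  define C where "C = coeff (U div Np) 0"
  define D where "D = V div Np"
  have qU: "poly (U div Np) x = C" for x
  proof (cases "U div Np = 0")
    case True then show ?thesis unfolding C_def by simp
  next
    case False
    then have "degree U = degree Np + degree (U div Np)" using Uf Np0
      by (metis degree_mult_eq)
    then have "degree (U div Np) = 0" using degree_Up[of c ys ys' xs' m r s] dNp unfolding U_def by simp
    then have "U div Np = [:C:]" unfolding C_def using degree_0_id by metis
    then show ?thesis by simp
  qed
  have dD: "degree D \<le> 2"
  proof (cases "D = 0")
    case True then show ?thesis by simp
  next
    case False
    then have "degree V = degree Np + degree D" using Vf Np0 unfolding D_def
      by (metis degree_mult_eq)
    then show ?thesis using degree_Vp[of c ys ys' xs' m r s] dNp m unfolding V_def by simp
  qed
  define S where "S = (\<lambda>k. xs' (s + int k)) ` {..m}"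
  have main: "Ddag (Qfun ys ys' m r s) yp ym
              = C * bqX c 2 x * (\<Prod>k\<in>{1..<m}. (x - xs (r + int k)))
                  / (\<Prod>k\<le>m. (x - xs' (s + int k))) \<and>
            Mdag (Qfun ys ys' m r s) yp ym
              = poly D x * (\<Prod>k\<in>{1..<m}. (x - xs (r + int k)))
                  / (\<Prod>k\<le>m. (x - xs' (s + int k)))"
    if x: "x \<notin> S" and ab: "yp \<noteq> ym" and F: "\<forall>t. bqF c x t = bqX c 2 x * (t - yp) * (t - ym)" for x yp ym
  proof -
    have xn: "\<forall>k\<le>m. x \<noteq> xs' (s + int k)" using x unfolding S_def by auto
    note f = formula[OF ell' injy' Y2 m xn ab F, of ys r]
    have pU: "poly U x = poly Np x * C" using arg_cong[OF Uf, of "\<lambda>p. poly p x"] qU by simp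
    have pV: "poly V x = poly Np x * poly D x" using arg_cong[OF Vf, of "\<lambda>p. poly p x"] unfolding D_def by simp
    show ?thesis
      using f unfolding U_def[symmetric] V_def[symmetric] Dn_def[symmetric] Dn_eval pU pV Np_eval
      by (simp add: algebra_simps)
  qed
  have m1: "C = (ys' s - ys r) / bqY c 2 (ys' s) \<and>
        (\<forall>x. poly D x = (bqX c 0 x + (ys r + ys' s) * bqX c 1 x / 2 + ys r * ys' s * bqX c 2 x)
                         / bqY c 2 (ys' s))" if m1: "m = 1"
  proof -
    have Np1: "Np = 1" unfolding Np_def m1 by simp
    have E1: "Ep xs' s 1 0 = 1" unfolding Ep_def
      by (simp add: atMost_Suc)
    have wA1: "wA ys ys' 1 r s 0 = ys' s - ys r" unfolding wA_def by simp
    have C1: "C = (ys' s - ys r) / bqY c 2 (ys' s)"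
      unfolding C_def Np1 U_def Up_def m1 using E1 wA1 by simp
    have "poly D x = (bqX c 0 x + (ys r + ys' s) * bqX c 1 x / 2 + ys r * ys' s * bqX c 2 x)
                         / bqY c 2 (ys' s)" for x
    proof -
      define w where "w = ys' s"
      define Y where "Y = bqY c 2 w"
      have Yn: "Y \<noteq> 0" unfolding Y_def w_def using Y2 by simp
      have Fw: "bqF c x w = Y * (x - xs' s) * (x - xs' (s + 1))"
        using ell' unfolding elliptic_seq_def Y_def w_def by blast
      have Dn1: "poly Dn x = (x - xs' s) * (x - xs' (s + 1))" unfolding Dn_eval m1
        by (simp add: atMost_Suc)
      then have Dnx: "poly Dn x = (bqX c 0 x + w * bqX c 1 x + w^2 * bqX c 2 x) / Y"
      proof -
        have "bqX c 0 x + w * bqX c 1 x + w^2 * bqX c 2 x = Y * ((x - xs' s) * (x - xs' (s + 1)))"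
          using Fw unfolding bqF_X by (simp add: mult.assoc)
        then show ?thesis using Yn Dn1 by simp
      qed
      have "poly D x = poly Dn x + (w - ys r) / (2 * Y) * (- bqX c 1 x - 2 * w * bqX c 2 x)"
        unfolding D_def Np1 V_def Vp_def m1 Dn_def
        using E1 wA1 by (simp add: poly_Xp w_def Y_def)
      also have "\<dots> = (bqX c 0 x + (ys r + w) * bqX c 1 x / 2 + ys r * w * bqX c 2 x) / Y"
        unfolding Dnx using Yn by (simp add: field_simps power2_eq_square)
      finally show ?thesis unfolding w_def Y_def .
    qed
    with C1 show ?thesis by simp
  qed
  show ?thesis
    apply (rule exI[of _ C], rule exI[of _ D])
    using dD m1 main by (auto intro!: exI[of _ S] simp: S_def)
qed

end
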